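(* Let $G$ be an abelian group, $n\ge 4$ an even integer, and $P_0,P_1,\dots,P_{n-1}$ distinct elements of $G$ forming an alternating cycle in the sum cograph, i.e. there are $a,b\in G$ with $P_i+P_{i+1}=a$ for all even $i$ and $P_i+P_{i+1}=b$ for all odd $i$ (indices modulo $n$). Then $G$ contains a nonzero element $x$ with $(n/2)x=0$.
   Context: A sum cograph over an abelian group $G$ has as points distinct elements of $G$, and the edge between distinct points $X,Y$ is $X+Y$. *)

theory Defs
  imports Main
begin

end

theory Submission
  imports Defs
begin

theorem corollary2p1p5:
  fixes P :: "nat \<Rightarrow> 'a::ab_group_add" and n :: nat and a b :: 'a
  assumes "n \<ge> 4" and "even n"
    and "inj_on P {..<n}"
    and "\<forall>i<n. even i \<longrightarrow> P i + P ((i + 1) mod n) = a"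
    and "\<forall>i<n. odd i \<longrightarrow> P i + P ((i + 1) mod n) = b"
  shows "\<exists>x::'a. x \<noteq> 0 \<and> (\<Sum>j<n div 2. x) = 0"
proof -
  define d where "d = b - a"
  have ev: "P (i+1) = a - P i" if "even i" "i + 1 < n" for i
  proof -
    have "P i + P ((i + 1) mod n) = a" using assms(4) that by (metis Suc_lessD add.commute plus_1_eq_Suc mod_less)
    then show ?thesis using that by (simp add: algebra_simps eq_diff_eq)
  qed
  have od: "P (i+1) = b - P i" if "odd i" "i + 1 < n" for i
  proof -
    have "P i + P ((i + 1) mod n) = b" using assms(5) that by (metis Suc_lessD add.commute plus_1_eq_Suc mod_less)
    then show ?thesis using that by (simp add: algebra_simps eq_diff_eq)
  qed
  have main: "2*k < n \<Longrightarrow> P (2*k) = P 0 + (\<Sum>j<k. d)" for k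
  proof (induction k)
    case 0 then show ?case by simp
  next
    case (Suc k)
    have h1: "P (2*k+1) = a - P (2*k)" using ev[of "2*k"] Suc.prems by simp
    have h2: "P (2*k+1+1) = b - P (2*k+1)" using od[of "2*k+1"] Suc.prems by simp
    have "P (2*Suc k) = P (2*k+1+1)" by simp
    also have "\<dots> = b - (a - P (2*k))" using h1 h2 by metis
    also have "\<dots> = b - a + P (2*k)" by (simp add: algebra_simps)
    also have "\<dots> = P 0 + (\<Sum>j<Suc k. d)" using Suc by (simp add: d_def algebra_simps)
    finally show ?case .
  qed
  define m where "m = n div 2"
  have nm: "n = 2*m" using assms(2) m_def by auto
  have m2: "m \<ge> 2" using assms(1) nm by auto
  obtain k where k: "m = Suc k" using m2 by (cases m) auto
  have pk: "P (2*k) = P 0 + (\<Sum>j<k. d)" using main[of k] nm k by simp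
  have pl: "P (2*k+1) = a - P (2*k)" using ev[of "2*k"] nm k by simp
  have last: "P (2*k+1) + P 0 = b"
  proof -
    have "P (2*k+1) + P ((2*k+1 + 1) mod n) = b" using assms(5) nm k by auto
    moreover have "(2*k+1+1) mod n = 0" using nm k by simp
    ultimately show ?thesis by simp
  qed
  define S where "S = (\<Sum>j<k. d)"
  have e1: "P (2*k+1) = a - P 0 - S" using pk pl S_def by (simp add: algebra_simps)
  have "a - P 0 - S + P 0 = b" using last e1 by metis
  then have e2: "S = a - b" by (simp add: algebra_simps)
  have "(\<Sum>j<m. d) = S + d" using k S_def by simp
  also have "\<dots> = 0" using e2 d_def by simp
  finally have "(\<Sum>j<m. d) = 0" .
  moreover have "d \<noteq> 0"
  proof
    assume "d = 0"
    have "P 2 = P 0 + d" using main[of 1] assms(1) by simp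
    then have "P 2 = P 0" using \<open>d = 0\<close> by simp
    moreover have "(2::nat) \<in> {..<n}" "(0::nat) \<in> {..<n}" using assms(1) by auto
    ultimately show False using assms(3) by (metis inj_on_eq_iff zero_neq_numeral)
  qed
  ultimately show ?thesis unfolding m_def by blast
qed

end
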